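(* Let $X\subset\mathbb{R}^n$ be a finite set of points, $\epsilon\ge0$, and let $(F,G)$ be the output of the coefficient-normalized VCA or of the gradient-normalized VCA on input $(X,\epsilon)$, with degree-$t$ parts $F_t$. Then for every integer $\tau\ge 0$, $|F^\tau|=\sum_{t=0}^{\tau}|F_t|\le\binom{n+\tau}{n}$.
   Context: $\mathcal{R}_n=\mathbb{R}[x_1,\ldots,x_n]$. For $X=\{\boldsymbol x_1,\ldots,\boldsymbol x_N\}$ and $h\in\mathcal R_n$, $h(X)=(h(\boldsymbol x_1),\ldots,h(\boldsymbol x_N))^\top$; for an ordered finite set $H=\{h_1,\ldots,h_s\}$, $H(X)$ has columns $h_j(X)$; $H\boldsymbol w=\sum_jw_jh_j$ and $HW=\{H\boldsymbol w_1,\ldots\}$ for $W$ with columns $\boldsymbol w_i$. Normalization matrices: gradient, $\mathfrak N_{\mathrm g}(H;X)=\mathfrak n_{\mathrm g}(H;X)^\top\mathfrak n_{\mathrm g}(H;X)$ where $\mathfrak n_{\mathrm g}(H;X)$ has columns $\mathrm{vec}(\nabla h_j(X))$ and $\nabla h(X)$ is the $N\times n$ matrix of gradients of $h$ at the points; coefficient, $\mathfrak N_{\mathrm c}(H)=\mathfrak n_{\mathrm c}(H)^\top\mathfrak n_{\mathrm c}(H)$ where $\mathfrak n_{\mathrm c}(H)$ has as columns the coefficient vectors of the $h_j$. Normalized VCA with normalization matrix $\mathfrak N$ on input $(X,\epsilon)$: $F_0=\{m\}$ ($m$ a nonzero constant), $G_0=\emptyset$; for $t=1,2,\ldots$: (S1)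 $C_1^{\mathrm{pre}}=\{x_1,\ldots,x_n\}$, $C_t^{\mathrm{pre}}=\{pq:p\in F_1,q\in F_{t-1}\}$ for $t>1$; $C_t=C_t^{\mathrm{pre}}-F^{t-1}F^{t-1}(X)^\dagger C_t^{\mathrm{pre}}(X)$ with $F^{t-1}=F_0\cup\cdots\cup F_{t-1}$ and $\dagger$ the pseudo-inverse. (S2) Solve $C_t(X)^\top C_t(X)V=\mathfrak N(C_t)V\Lambda$ with generalized eigenvectors $\boldsymbol v_i$ and eigenvalues $\lambda_i$. (S3) $F_t=\{C_t\boldsymbol v_i:\sqrt{\lambda_i}>\epsilon\}$, $G_t=\{C_t\boldsymbol v_i:\sqrt{\lambda_i}\le\epsilon\}$; if $F_t=\emptyset$ output $F=F_0\cup\cdots\cup F_t$, $G=G_0\cup\cdots\cup G_t$; else continue. Gradient-normalized VCA uses $\mathfrak N=\mathfrak N_{\mathrm g}(\cdot;X)$, coefficient-normalized uses $\mathfrak N=\mathfrak N_{\mathrm c}$. $F_t$ is empty for $t$ beyond the termination step. *)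

theory Defs
  imports "HOL-Library.Poly_Mapping" "Jordan_Normal_Form.Matrix"
begin

type_synonym mpoly = "(nat \<Rightarrow>\<^sub>0 nat) \<Rightarrow>\<^sub>0 real"
type_synonym point = "nat \<Rightarrow> real"

definition pconst :: "real \<Rightarrow> mpoly" where
  "pconst c = Poly_Mapping.single 0 c"

definition pvar :: "nat \<Rightarrow> mpoly" where
  "pvar i = Poly_Mapping.single (Poly_Mapping.single i 1) 1"

definition peval :: "mpoly \<Rightarrow> point \<Rightarrow> real" where
  "peval p x = (\<Sum>a\<in>Poly_Mapping.keys p. Poly_Mapping.lookup p a * (\<Prod>i\<in>Poly_Mapping.keys a. x i ^ Poly_Mapping.lookup a i))"

definition pdiff_eval :: "mpoly \<Rightarrow> nat \<Rightarrow> point \<Rightarrow> real" where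
  "pdiff_eval p l x = (\<Sum>a\<in>Poly_Mapping.keys p. Poly_Mapping.lookup p a * (of_nat (Poly_Mapping.lookup a l) * x l ^ (Poly_Mapping.lookup a l - 1))
        * (\<Prod>i\<in>Poly_Mapping.keys a - {l}. x i ^ Poly_Mapping.lookup a i))"

definition evalmat :: "mpoly list \<Rightarrow> point list \<Rightarrow> real mat" where
  "evalmat H X = mat (length X) (length H) (\<lambda>(i,j). peval (H ! j) (X ! i))"

definition lincomb :: "mpoly list \<Rightarrow> real vec \<Rightarrow> mpoly" where
  "lincomb H w = (\<Sum>j<length H. pconst (w $ j) * H ! j)"

definition lincombs :: "mpoly list \<Rightarrow> real mat \<Rightarrow> mpoly list" where
  "lincombs H W = map (\<lambda>i. lincomb H (col W i)) [0..<dim_col W]"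

definition pinv :: "real mat \<Rightarrow> real mat" where
  "pinv A = (THE B. B \<in> carrier_mat (dim_col A) (dim_row A) \<and> A * B * A = A \<and> B * A * B = B
      \<and> transpose_mat (A * B) = A * B \<and> transpose_mat (B * A) = B * A)"

text \<open>Gradient normalization N_g(H;X) = n_g^T n_g, where column j of n_g is vec(grad h_j(X));
  entry (i,j) is the sum over points and coordinates of products of partial derivatives.\<close>
definition Ng :: "nat \<Rightarrow> point list \<Rightarrow> mpoly list \<Rightarrow> real mat" where
  "Ng n X H = mat (length H) (length H) (\<lambda>(i,j).
      \<Sum>k<length X. \<Sum>l<n. pdiff_eval (H ! i) l (X ! k) * pdiff_eval (H ! j) l (X ! k))"

text \<open>Coefficient normalization N_c(H) = n_c^T n_c, columns of n_c = coefficient vectors.\<close>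
definition Nc :: "mpoly list \<Rightarrow> real mat" where
  "Nc H = mat (length H) (length H) (\<lambda>(i,j).
      \<Sum>a\<in>(\<Union>h\<in>set H. Poly_Mapping.keys h). Poly_Mapping.lookup (H ! i) a * Poly_Mapping.lookup (H ! j) a)"

definition Cpre :: "nat \<Rightarrow> mpoly list \<Rightarrow> mpoly list \<Rightarrow> nat \<Rightarrow> mpoly list" where
  "Cpre n F1 Fprev t = (if t = 1 then map pvar [0..<n]
       else remdups [p * q. p \<leftarrow> F1, q \<leftarrow> Fprev])"

definition Cset :: "point list \<Rightarrow> mpoly list \<Rightarrow> mpoly list \<Rightarrow> mpoly list" where
  "Cset X Fall Cp = (let W = pinv (evalmat Fall X) * evalmat Cp X;
                         P = lincombs Fall W
                     in map (\<lambda>j. Cp ! j - P ! j) [0..<length Cp])"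

definition vca_split :: "(mpoly list \<Rightarrow> real mat) \<Rightarrow> point list \<Rightarrow> real \<Rightarrow> mpoly list
     \<Rightarrow> mpoly list \<Rightarrow> mpoly list \<Rightarrow> bool" where
  "vca_split Nf X eps C Ft Gt \<longleftrightarrow>
     (\<exists>V lam. V \<in> carrier_mat (length C) (length lam) \<and>
       transpose_mat (evalmat C X) * evalmat C X * V
          = Nf C * V * mat (length lam) (length lam) (\<lambda>(i,j). if i = j then lam ! i else 0) \<and>
       transpose_mat V * Nf C * V = 1\<^sub>m (length lam) \<and>
       Ft = [lincomb C (col V i). i \<leftarrow> [0..<length lam], sqrt (lam ! i) > eps] \<and>
       Gt = [lincomb C (col V i). i \<leftarrow> [0..<length lam], \<not> sqrt (lam ! i) > eps])"

definition vca_run :: "(mpoly list \<Rightarrow> real mat) \<Rightarrow> nat \<Rightarrow> point list \<Rightarrow> real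
     \<Rightarrow> (nat \<Rightarrow> mpoly list) \<Rightarrow> (nat \<Rightarrow> mpoly list) \<Rightarrow> bool" where
  "vca_run Nf n X eps F G \<longleftrightarrow>
     (\<exists>m T. m \<noteq> 0 \<and> T \<ge> 1 \<and> F 0 = [pconst m] \<and> G 0 = [] \<and>
       (\<forall>t. 1 \<le> t \<and> t \<le> T \<longrightarrow>
          vca_split Nf X eps
            (Cset X (concat (map F [0..<t])) (Cpre n (F 1) (F (t - 1)) t)) (F t) (G t)) \<and>
       (\<forall>t. 1 \<le> t \<and> t < T \<longrightarrow> F t \<noteq> []) \<and> F T = [] \<and>
       (\<forall>t > T. F t = [] \<and> G t = []))"

end

theory Submission
  imports Defs "Jordan_Normal_Form.Gauss_Jordan_Elimination" "HOL-Library.Multiset"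
begin


lemma massoc: fixes A :: "'a :: semiring_0 mat"
  shows "dim_col A = dim_row B \<Longrightarrow> dim_col B = dim_row C \<Longrightarrow> A * B * C = A * (B * C)"
  by (rule assoc_mult_mat[of A "dim_row A" "dim_col A" B "dim_col B" C "dim_col C"]) auto

lemma ginv_exists:
  fixes A :: "'a :: field mat"
  assumes A: "A \<in> carrier_mat nr nc"
  shows "\<exists>G \<in> carrier_mat nc nr. A * G * A = A"
proof -
  define C where "C = gauss_jordan_single A"
  note gj = gauss_jordan_single[OF A C_def[symmetric]]
  from gj(4) obtain P Q where CP: "C = P * A" and P: "P \<in> carrier_mat nr nr" and Q: "Q \<in> carrier_mat nr nr"
    and QP: "Q * P = 1\<^sub>m nr" and PQ: "P * Q = 1\<^sub>m nr" by blast
  have Cc: "C \<in> carrier_mat nr nc" by fact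
  from gj(3) obtain f where piv: "pivot_fun C f nc" unfolding row_echelon_form_def using Cc by auto
  have dr: "dim_row C = nr" using Cc by auto
  note pd = pivot_funD[OF dr piv]
  define G' where "G' = mat nc nr (\<lambda>(j,i). if f i < nc \<and> j = f i then 1 else (0::'a))"
  have G': "G' \<in> carrier_mat nc nr" unfolding G'_def by auto
  have CG: "C * G' = mat nr nr (\<lambda>(k,i). if k = i \<and> f i < nc then 1 else 0)"
  proof (rule eq_matI)
    fix k i assume k: "k < dim_row (mat nr nr (\<lambda>(k,i). if k = i \<and> f i < nc then 1 else (0::'a)))"
      and i: "i < dim_col (mat nr nr (\<lambda>(k,i). if k = i \<and> f i < nc then 1 else (0::'a)))"
    hence k: "k < nr" and i: "i < nr" by auto
    have "(C * G') $$ (k,i) = (\<Sum>j<nc. C $$ (k,j) * G' $$ (j,i))"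
      using k i Cc G' by (auto simp: scalar_prod_def lessThan_atLeast0 intro!: sum.cong)
    also have "\<dots> = (if f i < nc then C $$ (k, f i) else 0)"
      using i unfolding G'_def by (auto simp: if_distrib cong: if_cong)
    also have "\<dots> = (if k = i \<and> f i < nc then 1 else 0)"
      using pd(4)[OF i] pd(5)[OF i _ k] by auto
    finally show "(C * G') $$ (k,i) = mat nr nr (\<lambda>(k,i). if k = i \<and> f i < nc then 1 else (0::'a)) $$ (k,i)"
      using k i by simp
  qed (use Cc G' in auto)
  have CGC: "C * G' * C = C"
  proof (rule eq_matI)
    fix k l assume "k < dim_row C" "l < dim_col C"
    hence k: "k < nr" and l: "l < nc" using Cc by auto
    have "(C * G' * C) $$ (k,l) = (\<Sum>i<nr. (if k = i \<and> f i < nc then 1 else 0) * C $$ (i,l))"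
      unfolding CG using k l Cc by (auto simp: scalar_prod_def lessThan_atLeast0 intro!: sum.cong)
    also have "\<dots> = (\<Sum>i<nr. if i = k then (if f k < nc then C $$ (k,l) else 0) else 0)"
      by (rule sum.cong) auto
    also have "\<dots> = (if f k < nc then C $$ (k,l) else 0)"
      using k by simp
    also have "\<dots> = C $$ (k,l)"
      using pd(1)[OF k] pd(2)[OF k, of l] l by (cases "f k < nc") auto
    finally show "(C * G' * C) $$ (k,l) = C $$ (k,l)" .
  qed (use Cc G' in auto)
  define G where "G = G' * P"
  have Gc: "G \<in> carrier_mat nc nr" unfolding G_def using G' P by auto
  have "A = Q * C" unfolding CP using QP Q P A by (simp add: assoc_mult_mat[symmetric, of Q nr nr P nr A nc])
  hence "A * G * A = Q * C * (G' * P) * (Q * C)" unfolding G_def by simp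
  also have "\<dots> = Q * (C * G' * ((P * Q) * C))" using Q Cc G' P
    by (simp add: massoc carrier_matD)
  also have "P * (Q * C) = (P * Q) * C" using P Q Cc by (simp add: massoc carrier_matD)
  hence "P * (Q * C) = C" using PQ Cc by simp
  hence "Q * (C * G' * ((P * Q) * C)) = Q * (C * G' * C)" using P Q Cc by (simp add: massoc carrier_matD)
  also have "\<dots> = A" using CGC \<open>A = Q * C\<close> by simp
  finally show ?thesis using Gc by blast
qed

lemma mdistl: fixes A :: "'a :: ring mat"
  shows "dim_col A = dim_row B \<Longrightarrow> dim_row B = dim_row C \<Longrightarrow> dim_col B = dim_col C \<Longrightarrow> A * (B - C) = A * B - A * C"
  by (rule mult_minus_distrib_mat[of A "dim_row A" "dim_col A" B "dim_col B"]) auto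

lemma mdistr: fixes A :: "'a :: ring mat"
  shows "dim_row A = dim_row B \<Longrightarrow> dim_col A = dim_col B \<Longrightarrow> dim_col A = dim_row C \<Longrightarrow> (A - B) * C = A * C - B * C"
  by (rule minus_mult_distrib_mat[of A "dim_row A" "dim_col A" B C "dim_col C"]) auto

lemma mtrans: fixes A :: "'a :: comm_semiring_0 mat"
  shows "dim_col A = dim_row B \<Longrightarrow> transpose_mat (A * B) = transpose_mat B * transpose_mat A"
  by (rule transpose_mult[of A "dim_row A" "dim_col A" B "dim_col B"]) auto

lemma gram_zero:
  fixes D :: "real mat"
  assumes D: "D \<in> carrier_mat nr nc" and z: "transpose_mat D * D = 0\<^sub>m nc nc"
  shows "D = 0\<^sub>m nr nc"
proof (rule eq_matI)
  fix i j assume "i < dim_row (0\<^sub>m nr nc :: real mat)" "j < dim_col (0\<^sub>m nr nc :: real mat)"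
  hence i: "i < nr" and j: "j < nc" by auto
  have "(transpose_mat D * D) $$ (j,j) = (\<Sum>k<nr. D $$ (k,j) * D $$ (k,j))"
    using D j by (auto simp: scalar_prod_def lessThan_atLeast0 intro!: sum.cong)
  hence "(\<Sum>k<nr. D $$ (k,j) * D $$ (k,j)) = 0" using z j by simp
  hence "\<forall>k\<in>{..<nr}. D $$ (k,j) * D $$ (k,j) = 0"
    by (subst (asm) sum_nonneg_eq_0_iff) auto
  thus "D $$ (i,j) = 0\<^sub>m nr nc $$ (i,j)" using i j by auto
qed (use D in auto)

lemma ginv_half:
  fixes A :: "real mat"
  assumes A: "A \<in> carrier_mat nr nc" and G: "G \<in> carrier_mat nc nc"
    and g: "transpose_mat A * A * G * (transpose_mat A * A) = transpose_mat A * A"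
  shows "A * G * (transpose_mat A * A) = A"
    "transpose_mat (A * G * transpose_mat A) = A * G * transpose_mat A"
proof -
  let ?M = "transpose_mat A * A"
  have dims: "dim_row A = nr" "dim_col A = nc" "dim_row G = nc" "dim_col G = nc" using A G by auto
  define D where "D = A * G * ?M - A"
  have Dc: "D \<in> carrier_mat nr nc" unfolding D_def using A G by auto
  have "transpose_mat A * D = ?M * G * ?M - ?M" unfolding D_def using dims
    by (simp add: mdistl massoc)
  hence AD: "transpose_mat A * D = 0\<^sub>m nc nc" using g A by (simp add: minus_r_inv_mat[of _ nc nc])
  have Mt: "transpose_mat ?M = ?M" using dims by (simp add: mtrans)
  have "transpose_mat D = transpose_mat (A * G * ?M) - transpose_mat A" unfolding D_def
    by (rule transpose_minus[of _ nr nc]) (use A G in auto)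
  also have "transpose_mat (A * G * ?M) = ?M * transpose_mat G * transpose_mat A"
    using dims Mt by (simp add: mtrans massoc)
  finally have "transpose_mat D * D = (?M * transpose_mat G * transpose_mat A - transpose_mat A) * D" by simp
  also have "\<dots> = ?M * transpose_mat G * (transpose_mat A * D) - transpose_mat A * D"
    using dims Dc by (simp add: mdistr massoc carrier_matD)
  also have "\<dots> = 0\<^sub>m nc nc" unfolding AD using dims by simp
  finally have "D = 0\<^sub>m nr nc" using gram_zero[OF Dc] by blast
  hence D0: "D = 0\<^sub>m nr nc" .
  show 1: "A * G * ?M = A"
  proof (rule eq_matI)
    fix i j assume "i < dim_row A" "j < dim_col A"
    hence ij: "i < nr" "j < nc" using dims by auto
    have "D $$ (i,j) = 0" using D0 ij by simp
    thus "(A * G * ?M) $$ (i,j) = A $$ (i,j)" unfolding D_def using ij dims by simp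
  qed (use dims in auto)
  have At: "transpose_mat A = ?M * transpose_mat G * transpose_mat A"
    using arg_cong[OF 1, of transpose_mat] dims Mt by (simp add: mtrans massoc)
  have "A * G * transpose_mat A = A * G * (?M * transpose_mat G * transpose_mat A)"
    using At by simp
  also have "\<dots> = (A * G * ?M) * transpose_mat G * transpose_mat A"
    using dims by (simp add: massoc)
  also have "\<dots> = A * transpose_mat G * transpose_mat A" using 1 by simp
  finally show "transpose_mat (A * G * transpose_mat A) = A * G * transpose_mat A"
    using dims by (simp add: mtrans massoc)
qed

definition is_mp :: "real mat \<Rightarrow> real mat \<Rightarrow> bool" where
  "is_mp A B \<longleftrightarrow> B \<in> carrier_mat (dim_col A) (dim_row A) \<and> A * B * A = A \<and> B * A * B = B
      \<and> transpose_mat (A * B) = A * B \<and> transpose_mat (B * A) = B * A"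

lemma mp_exists: fixes A :: "real mat" shows "\<exists>B. is_mp A B"
proof -
  define nr nc where "nr = dim_row A" and "nc = dim_col A"
  have A: "A \<in> carrier_mat nr nc" unfolding nr_def nc_def by auto
  obtain G where G: "G \<in> carrier_mat nc nc" and g: "transpose_mat A * A * G * (transpose_mat A * A) = transpose_mat A * A"
    using ginv_exists[of "transpose_mat A * A" nc nc] A by auto
  obtain H where H: "H \<in> carrier_mat nr nr" and h: "A * transpose_mat A * H * (A * transpose_mat A) = A * transpose_mat A"
    using ginv_exists[of "A * transpose_mat A" nr nr] A by auto
  have At: "transpose_mat A \<in> carrier_mat nc nr" using A by auto
  note h1 = ginv_half[OF A G g]
  note h2 = ginv_half[OF At H, unfolded transpose_transpose, OF h]
  have dims: "dim_row A = nr" "dim_col A = nc" "dim_row G = nc" "dim_col G = nc" "dim_row H = nr" "dim_col H = nr"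
    using A G H by auto
  have s2: "transpose_mat A * H * A = transpose_mat A * transpose_mat H * A"
    using h2(2) dims by (simp add: mtrans massoc)
  have "transpose_mat (transpose_mat A * H * (A * transpose_mat A)) = A * transpose_mat A * transpose_mat H * A"
    using dims by (simp add: mtrans massoc)
  hence h3': "A * transpose_mat A * transpose_mat H * A = A" using h2(1) by simp
  have h3: "A * transpose_mat A * H * A = A"
  proof -
    have "A * transpose_mat A * H * A = A * (transpose_mat A * H * A)" using dims by (simp add: massoc)
    also have "\<dots> = A * (transpose_mat A * transpose_mat H * A)" using s2 by simp
    also have "\<dots> = A" using h3' dims by (simp add: massoc)
    finally show ?thesis .
  qed
  define B where "B = transpose_mat A * H * A * G * transpose_mat A"
  have Bc: "B \<in> carrier_mat nc nr" unfolding B_def using A G H by auto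
  have AB: "A * B = A * G * transpose_mat A"
  proof -
    have "A * B = (A * transpose_mat A * H * A) * G * transpose_mat A" unfolding B_def using dims by (simp add: massoc)
    thus ?thesis using h3 by simp
  qed
  have BA: "B * A = transpose_mat A * H * A"
  proof -
    have "B * A = transpose_mat A * H * (A * G * (transpose_mat A * A))" unfolding B_def using dims by (simp add: massoc)
    thus ?thesis using h1 dims by (simp add: massoc)
  qed
  have "A * B * A = A"
    unfolding AB using h1 dims by (simp add: massoc)
  moreover have "B * A * B = B"
  proof -
    have "B * A * B = transpose_mat A * H * A * B" using BA by simp
    also have "\<dots> = transpose_mat A * H * (A * transpose_mat A * H * A) * G * transpose_mat A"
      unfolding B_def using dims by (simp add: massoc)
    finally have "B * A * B = transpose_mat A * H * (A * transpose_mat A * H * A) * G * transpose_mat A" .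
    thus ?thesis using h3 unfolding B_def by simp
  qed
  moreover have "transpose_mat (A * B) = A * B" unfolding AB using h1 by simp
  moreover have "transpose_mat (B * A) = B * A" unfolding BA using h2 by simp
  ultimately show ?thesis using Bc unfolding is_mp_def nr_def nc_def by blast
qed

lemma mp_unique: assumes b: "is_mp A B" and c: "is_mp A C" shows "B = C"
proof -
  define nr nc where "nr = dim_row A" and "nc = dim_col A"
  have dims: "dim_row A = nr" "dim_col A = nc" "dim_row B = nc" "dim_col B = nr" "dim_row C = nc" "dim_col C = nr"
    using b c unfolding is_mp_def nr_def nc_def by auto
  have b1: "A * B * A = A" "B * A * B = B" "transpose_mat (A * B) = A * B" "transpose_mat (B * A) = B * A"
    using b unfolding is_mp_def by auto
  have c1: "A * C * A = A" "C * A * C = C" "transpose_mat (A * C) = A * C" "transpose_mat (C * A) = C * A"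
    using c unfolding is_mp_def by auto
  have At1: "transpose_mat A = transpose_mat A * (A * C)"
  proof -
    have "transpose_mat A = transpose_mat (A * C * A)" using c1 by simp
    also have "\<dots> = transpose_mat A * transpose_mat (A * C)" using dims by (simp add: mtrans)
    finally show ?thesis using c1 by simp
  qed
  have At2: "transpose_mat A = (B * A) * transpose_mat A"
  proof -
    have "transpose_mat A = transpose_mat (A * B * A)" using b1 by simp
    also have "\<dots> = transpose_mat (B * A) * transpose_mat A" using dims by (simp add: mtrans massoc)
    finally show ?thesis using b1 by simp
  qed
  have "B = B * transpose_mat (A * B)" using b1 dims by (simp add: massoc)
  also have "\<dots> = B * transpose_mat B * transpose_mat A" using dims by (simp add: mtrans massoc)
  also have "\<dots> = B * transpose_mat B * (transpose_mat A * (A * C))" using At1 by simp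
  also have "\<dots> = B * (transpose_mat (A * B)) * A * C" using dims by (simp add: mtrans massoc)
  also have "\<dots> = (B * A * B) * A * C" using b1 dims by (simp add: massoc)
  also have "\<dots> = B * A * C" using b1 by simp
  finally have 1: "B = B * A * C" .
  have "C = transpose_mat (C * A) * C" using c1 dims by (simp add: massoc)
  also have "\<dots> = transpose_mat A * transpose_mat C * C" using dims by (simp add: mtrans massoc)
  also have "\<dots> = ((B * A) * transpose_mat A) * transpose_mat C * C" using At2 by simp
  also have "\<dots> = B * A * transpose_mat (C * A) * C" using dims by (simp add: mtrans massoc)
  also have "\<dots> = B * A * (C * A * C)" using c1 dims by (simp add: massoc)
  also have "\<dots> = B * A * C" using c1 by simp
  finally show ?thesis using 1 by simp
qed

lemma pinv_props: fixes A :: "real mat"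
  shows "pinv A \<in> carrier_mat (dim_col A) (dim_row A)" "A * pinv A * A = A"
    "transpose_mat (A * pinv A) = A * pinv A"
proof -
  have ex1: "\<exists>!B. is_mp A B" using mp_exists mp_unique by blast
  have "is_mp A (pinv A)" unfolding pinv_def using theI'[OF ex1[unfolded is_mp_def]] unfolding is_mp_def .
  thus "pinv A \<in> carrier_mat (dim_col A) (dim_row A)" "A * pinv A * A = A"
    "transpose_mat (A * pinv A) = A * pinv A" unfolding is_mp_def by auto
qed

lemma pinv_orth: fixes A :: "real mat"
  shows "transpose_mat A * A * pinv A = transpose_mat A"
proof -
  note p = pinv_props[of A]
  have "transpose_mat A = transpose_mat (A * pinv A * A)" using p by simp
  also have "\<dots> = transpose_mat A * transpose_mat (A * pinv A)" by (rule mtrans) (use p in auto)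
  also have "\<dots> = transpose_mat A * (A * pinv A)" by (simp only: p(3))
  also have "\<dots> = transpose_mat A * A * pinv A" using p by (simp add: massoc)
  finally show ?thesis by simp
qed



definition monoev :: "(nat \<Rightarrow>\<^sub>0 nat) \<Rightarrow> point \<Rightarrow> real" where
  "monoev a x = (\<Prod>i\<in>Poly_Mapping.keys a. x i ^ Poly_Mapping.lookup a i)"

lemma peval_superset: assumes "finite S" "Poly_Mapping.keys p \<subseteq> S"
  shows "peval p x = (\<Sum>a\<in>S. Poly_Mapping.lookup p a * monoev a x)"
  unfolding peval_def monoev_def
  by (rule sum.mono_neutral_left) (use assms in \<open>auto simp: in_keys_iff\<close>)

lemma lookup_pconst_mult: "Poly_Mapping.lookup (pconst c * p) a = c * Poly_Mapping.lookup p a"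
  by (simp add: pconst_def mult_map_scale_conv_mult[symmetric] map.rep_eq when_def)

lemma keys_pconst_mult: "Poly_Mapping.keys (pconst c * p) \<subseteq> Poly_Mapping.keys p"
  by (auto simp: in_keys_iff lookup_pconst_mult)

lemma peval_add: "peval (p + q) x = peval p x + peval q x"
proof -
  let ?S = "Poly_Mapping.keys p \<union> Poly_Mapping.keys q"
  have "peval (p + q) x = (\<Sum>a\<in>?S. Poly_Mapping.lookup (p + q) a * monoev a x)"
    by (rule peval_superset) (auto dest: subsetD[OF keys_add])
  also have "\<dots> = (\<Sum>a\<in>?S. Poly_Mapping.lookup p a * monoev a x) + (\<Sum>a\<in>?S. Poly_Mapping.lookup q a * monoev a x)"
    by (simp add: lookup_add algebra_simps sum.distrib)
  also have "\<dots> = peval p x + peval q x"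
    by (subst (1 2) peval_superset[of ?S]) auto
  finally show ?thesis .
qed

lemma peval_minus: "peval (p - q) x = peval p x - peval q x"
proof -
  let ?S = "Poly_Mapping.keys p \<union> Poly_Mapping.keys q"
  have "peval (p - q) x = (\<Sum>a\<in>?S. Poly_Mapping.lookup (p - q) a * monoev a x)"
    by (rule peval_superset) (auto dest: subsetD[OF keys_diff])
  also have "\<dots> = (\<Sum>a\<in>?S. Poly_Mapping.lookup p a * monoev a x) - (\<Sum>a\<in>?S. Poly_Mapping.lookup q a * monoev a x)"
    by (simp add: lookup_minus algebra_simps sum_subtractf)
  also have "\<dots> = peval p x - peval q x"
    by (subst (1 2) peval_superset[of ?S]) auto
  finally show ?thesis .
qed

lemma peval_zero: "peval 0 x = 0" unfolding peval_def by simp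

lemma peval_scale: "peval (pconst c * p) x = c * peval p x"
proof -
  have "peval (pconst c * p) x = (\<Sum>a\<in>Poly_Mapping.keys p. Poly_Mapping.lookup (pconst c * p) a * monoev a x)"
    by (rule peval_superset) (auto dest: subsetD[OF keys_pconst_mult])
  also have "\<dots> = (\<Sum>a\<in>Poly_Mapping.keys p. c * (Poly_Mapping.lookup p a * monoev a x))"
    by (simp add: lookup_pconst_mult mult.assoc)
  also have "\<dots> = c * peval p x"
    by (simp add: peval_superset[of "Poly_Mapping.keys p" p] sum_distrib_left)
  finally show ?thesis .
qed

lemma peval_sum: "finite J \<Longrightarrow> peval (\<Sum>j\<in>J. f j) x = (\<Sum>j\<in>J. peval (f j) x)"
  by (induction J rule: finite_induct) (auto simp: peval_zero peval_add)

lemma peval_lincomb: "peval (lincomb H w) x = (\<Sum>j<length H. w $ j * peval (H ! j) x)"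
  unfolding lincomb_def by (simp add: peval_sum peval_scale)

lemma keys_lincomb: "Poly_Mapping.keys (lincomb H w) \<subseteq> (\<Union>h\<in>set H. Poly_Mapping.keys h)"
proof -
  have "Poly_Mapping.keys (lincomb H w) \<subseteq> (\<Union>j<length H. Poly_Mapping.keys (pconst (w $ j) * H ! j))"
    unfolding lincomb_def by (rule keys_sum)
  also have "\<dots> \<subseteq> (\<Union>h\<in>set H. Poly_Mapping.keys h)"
    using keys_pconst_mult by fastforce
  finally show ?thesis .
qed



lemma mult_entry: "i < dim_row A \<Longrightarrow> j < dim_col B \<Longrightarrow> dim_col A = dim_row B \<Longrightarrow>
  (A * B) $$ (i,j) = (\<Sum>k<dim_col A. A $$ (i,k) * B $$ (k,j))"
  by (simp add: scalar_prod_def lessThan_atLeast0)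

definition dotp :: "point list \<Rightarrow> mpoly \<Rightarrow> mpoly \<Rightarrow> real" where
  "dotp X p q = (\<Sum>k<length X. peval p (X ! k) * peval q (X ! k))"

lemma dotp_sym: "dotp X p q = dotp X q p" unfolding dotp_def by (simp add: mult.commute)

lemma evalmat_entry: "k < length X \<Longrightarrow> j < length H \<Longrightarrow> evalmat H X $$ (k,j) = peval (H ! j) (X ! k)"
  unfolding evalmat_def by simp

lemma evalmat_dims[simp]: "dim_row (evalmat H X) = length X" "dim_col (evalmat H X) = length H"
  unfolding evalmat_def by auto

lemma peval_lincomb_col: assumes "dim_row V = length C" "a < dim_col V" "k < length X"
  shows "peval (lincomb C (col V a)) (X ! k) = (evalmat C X * V) $$ (k, a)"
proof -
  have "(evalmat C X * V) $$ (k, a) = (\<Sum>j<length C. evalmat C X $$ (k,j) * V $$ (j,a))"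
    by (subst mult_entry) (use assms in auto)
  also have "\<dots> = (\<Sum>j<length C. col V a $ j * peval (C ! j) (X ! k))"
    by (rule sum.cong) (use assms in \<open>auto simp: evalmat_entry\<close>)
  finally show ?thesis by (simp add: peval_lincomb)
qed

lemma listcomp_filter: "[f i. i \<leftarrow> xs, P i] = map f (filter P xs)"
  by (induction xs) auto

lemma split_gram:
  assumes V: "V \<in> carrier_mat (length C) L" and Nc: "Nf C \<in> carrier_mat (length C) (length C)"
    and eq: "transpose_mat (evalmat C X) * evalmat C X * V
          = Nf C * V * mat L L (\<lambda>(i,j). if i = j then lam ! i else 0)"
    and nor: "transpose_mat V * Nf C * V = 1\<^sub>m L"
    and a: "a < L" and b: "b < L"
  shows "dotp X (lincomb C (col V a)) (lincomb C (col V b)) = (if a = b then lam ! a else 0)"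
proof -
  let ?E = "evalmat C X"
  let ?La = "mat L L (\<lambda>(i,j). if i = j then lam ! i else (0::real))"
  have dims: "dim_row V = length C" "dim_col V = L" "dim_row (Nf C) = length C" "dim_col (Nf C) = length C"
    using V Nc by auto
  have "transpose_mat (?E * V) * (?E * V) = transpose_mat V * (transpose_mat ?E * ?E * V)"
    using dims by (simp add: mtrans massoc)
  also have "\<dots> = transpose_mat V * (Nf C * V * ?La)" using eq by simp
  also have "\<dots> = (transpose_mat V * Nf C * V) * ?La" using dims by (simp add: massoc)
  also have "\<dots> = ?La" using nor by simp
  finally have G: "transpose_mat (?E * V) * (?E * V) = ?La" .
  have "dotp X (lincomb C (col V a)) (lincomb C (col V b)) = (transpose_mat (?E * V) * (?E * V)) $$ (a,b)"
  proof -
    have "(transpose_mat (?E * V) * (?E * V)) $$ (a,b) = (\<Sum>k<length X. (?E * V) $$ (k,a) * (?E * V) $$ (k,b))"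
      by (subst mult_entry) (use a b dims in \<open>auto intro!: sum.cong\<close>)
    also have "\<dots> = dotp X (lincomb C (col V a)) (lincomb C (col V b))"
      unfolding dotp_def by (rule sum.cong) (use a b dims in \<open>auto simp: peval_lincomb_col\<close>)
    finally show ?thesis by simp
  qed
  also have "\<dots> = (if a = b then lam ! a else 0)" unfolding G using a b by simp
  finally show ?thesis .
qed

lemma split_props:
  assumes sp: "vca_split Nf X eps C Ft Gt" and Nc: "Nf C \<in> carrier_mat (length C) (length C)"
    and eps: "eps \<ge> 0"
  shows "\<forall>q\<in>set Ft. \<exists>v. q = lincomb C v"
    "\<forall>i<length Ft. \<forall>j<length Ft. i \<noteq> j \<longrightarrow> dotp X (Ft ! i) (Ft ! j) = 0"
    "\<forall>i<length Ft. dotp X (Ft ! i) (Ft ! i) > 0"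
proof -
  from sp obtain V lam where V: "V \<in> carrier_mat (length C) (length lam)"
    and eq: "transpose_mat (evalmat C X) * evalmat C X * V
          = Nf C * V * mat (length lam) (length lam) (\<lambda>(i,j). if i = j then lam ! i else 0)"
    and nor: "transpose_mat V * Nf C * V = 1\<^sub>m (length lam)"
    and Ft: "Ft = [lincomb C (col V i). i \<leftarrow> [0..<length lam], sqrt (lam ! i) > eps]"
    unfolding vca_split_def by blast
  define idx where "idx = filter (\<lambda>i. sqrt (lam ! i) > eps) [0..<length lam]"
  have Ft': "Ft = map (\<lambda>i. lincomb C (col V i)) idx" unfolding Ft idx_def by (rule listcomp_filter)
  have di: "distinct idx" unfolding idx_def by simp
  have ii: "\<And>i. i < length idx \<Longrightarrow> idx ! i < length lam \<and> sqrt (lam ! (idx ! i)) > eps"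
    unfolding idx_def using nth_mem by (metis (no_types, lifting) atLeastLessThan_iff mem_Collect_eq set_filter set_upt)
  note g = split_gram[of V C "length lam" Nf X lam, OF V Nc eq nor]
  show "\<forall>q\<in>set Ft. \<exists>v. q = lincomb C v" unfolding Ft' by auto
  show "\<forall>i<length Ft. \<forall>j<length Ft. i \<noteq> j \<longrightarrow> dotp X (Ft ! i) (Ft ! j) = 0"
    unfolding Ft' using g ii di by (auto simp: nth_eq_iff_index_eq)
  show "\<forall>i<length Ft. dotp X (Ft ! i) (Ft ! i) > 0"
  proof (intro allI impI)
    fix i assume "i < length Ft"
    hence i: "i < length idx" unfolding Ft' by simp
    have "sqrt (lam ! (idx ! i)) > 0" using ii[OF i] eps by linarith
    hence "lam ! (idx ! i) > 0" by simp
    thus "dotp X (Ft ! i) (Ft ! i) > 0" unfolding Ft' using g ii[OF i] i by simp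
  qed
qed



lemma cset_len: "length (Cset X Fall Cp) = length Cp"
  unfolding Cset_def Let_def by simp

lemma cset_orth_basic:
  assumes l: "l < length Fall" and j: "j < length Cp"
  shows "(\<Sum>k<length X. peval (Fall ! l) (X ! k) * peval (Cset X Fall Cp ! j) (X ! k)) = 0"
proof -
  define A where "A = evalmat Fall X"
  define E where "E = evalmat Cp X"
  define W where "W = pinv A * E"
  have pc: "pinv A \<in> carrier_mat (length Fall) (length X)" using pinv_props(1)[of A] unfolding A_def by simp
  have Wd: "dim_row W = length Fall" "dim_col W = length Cp" unfolding W_def E_def using pc by auto
  have Cj: "Cset X Fall Cp ! j = Cp ! j - lincombs Fall W ! j"
    unfolding Cset_def Let_def W_def A_def E_def using j by simp
  have Pj: "lincombs Fall W ! j = lincomb Fall (col W j)" unfolding lincombs_def using j Wd by simp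
  have pe: "peval (Cset X Fall Cp ! j) (X ! k) = (E - A * W) $$ (k,j)" if k: "k < length X" for k
    unfolding Cj Pj peval_minus using k j Wd
    by (simp add: peval_lincomb_col E_def A_def evalmat_entry)
  have "(\<Sum>k<length X. peval (Fall ! l) (X ! k) * peval (Cset X Fall Cp ! j) (X ! k))
      = (\<Sum>k<length X. transpose_mat A $$ (l,k) * (E - A * W) $$ (k,j))"
    by (rule sum.cong) (use l in \<open>auto simp: pe A_def evalmat_entry\<close>)
  also have "\<dots> = (transpose_mat A * (E - A * W)) $$ (l,j)"
    by (subst mult_entry) (use l j Wd in \<open>auto simp: A_def E_def\<close>)
  also have "transpose_mat A * (E - A * W) = transpose_mat A * E - transpose_mat A * A * pinv A * E"
    using Wd pc unfolding W_def by (simp add: mdistl massoc A_def E_def)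
  also have "\<dots> = transpose_mat A * E - transpose_mat A * E" by (simp add: pinv_orth)
  also have "(\<dots>) $$ (l,j) = 0" using l j by (simp add: A_def E_def)
  finally show ?thesis .
qed

lemma cset_orth:
  assumes l: "l < length Fall"
  shows "dotp X (Fall ! l) (lincomb (Cset X Fall Cp) v) = 0"
proof -
  let ?C = "Cset X Fall Cp"
  have "dotp X (Fall ! l) (lincomb ?C v) = (\<Sum>k<length X. \<Sum>j<length ?C. v $ j * (peval (Fall ! l) (X ! k) * peval (?C ! j) (X ! k)))"
    unfolding dotp_def peval_lincomb by (simp add: sum_distrib_left algebra_simps)
  also have "\<dots> = (\<Sum>j<length ?C. v $ j * (\<Sum>k<length X. peval (Fall ! l) (X ! k) * peval (?C ! j) (X ! k)))"
    by (subst sum.swap) (simp add: sum_distrib_left)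
  also have "\<dots> = 0" using cset_orth_basic[OF l] by (simp add: cset_len)
  finally show ?thesis .
qed



lemma peval_pconst: "peval (pconst c) x = c"
  unfolding peval_def pconst_def by auto

lemma run_orth_le:
  assumes run: "vca_run Nf n X eps F G" and eps: "eps \<ge> 0"
    and NfC: "\<And>H. Nf H \<in> carrier_mat (length H) (length H)"
    and st: "s \<le> t" and i: "i < length (F s)" and j: "j < length (F t)" and ne: "(s,i) \<noteq> (t,j)"
  shows "dotp X (F s ! i) (F t ! j) = 0"
proof -
  from run obtain m T where F0: "F 0 = [pconst m]"
    and sp: "\<And>t. 1 \<le> t \<Longrightarrow> t \<le> T \<Longrightarrow> vca_split Nf X eps
            (Cset X (concat (map F [0..<t])) (Cpre n (F 1) (F (t - 1)) t)) (F t) (G t)"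
    and FT: "F T = []" and Fgt: "\<And>t. t > T \<Longrightarrow> F t = []"
    unfolding vca_run_def by blast
  have t1: "t \<ge> 1" using st i j ne F0 by (cases "t = 0") auto
  have tT: "t \<le> T" proof (rule ccontr) assume "\<not> t \<le> T" thus False using j Fgt[of t] by simp qed
  note spt = sp[OF t1 tT]
  note pr = split_props[OF spt NfC eps]
  show ?thesis
  proof (cases "s = t")
    case True
    thus ?thesis using pr(2) i j ne by auto
  next
    case False
    hence "s < t" using st by simp
    hence "F s ! i \<in> set (concat (map F [0..<t]))" using i by (auto intro!: bexI[of _ s])
    then obtain l where l: "l < length (concat (map F [0..<t]))" and eq: "concat (map F [0..<t]) ! l = F s ! i"
      by (metis in_set_conv_nth)
    obtain v where v: "F t ! j = lincomb (Cset X (concat (map F [0..<t])) (Cpre n (F 1) (F (t - 1)) t)) v"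
      using pr(1) j by (meson nth_mem)
    show ?thesis unfolding v eq[symmetric] by (rule cset_orth[OF l])
  qed
qed

lemma run_orth:
  assumes run: "vca_run Nf n X eps F G" and eps: "eps \<ge> 0"
    and NfC: "\<And>H. Nf H \<in> carrier_mat (length H) (length H)"
    and i: "i < length (F s)" and j: "j < length (F t)" and ne: "(s,i) \<noteq> (t,j)"
  shows "dotp X (F s ! i) (F t ! j) = 0"
proof (cases "s \<le> t")
  case True thus ?thesis using run_orth_le[OF run eps NfC True i j ne] by simp
next
  case False
  hence "t \<le> s" by simp
  from run_orth_le[OF run eps NfC this j i] ne show ?thesis by (auto simp: dotp_sym)
qed

lemma run_pos:
  assumes run: "vca_run Nf n X eps F G" and eps: "eps \<ge> 0"
    and NfC: "\<And>H. Nf H \<in> carrier_mat (length H) (length H)"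
    and X: "X \<noteq> []" and i: "i < length (F t)"
  shows "dotp X (F t ! i) (F t ! i) > 0"
proof -
  from run obtain m T where m: "m \<noteq> 0" and F0: "F 0 = [pconst m]"
    and sp: "\<And>t. 1 \<le> t \<Longrightarrow> t \<le> T \<Longrightarrow> vca_split Nf X eps
            (Cset X (concat (map F [0..<t])) (Cpre n (F 1) (F (t - 1)) t)) (F t) (G t)"
    and Fgt: "\<And>t. t > T \<Longrightarrow> F t = []"
    unfolding vca_run_def by blast
  show ?thesis
  proof (cases "t = 0")
    case True
    hence "F t ! i = pconst m" using F0 i by simp
    hence "dotp X (F t ! i) (F t ! i) = real (length X) * (m * m)"
      unfolding dotp_def by (simp add: peval_pconst)
    thus ?thesis using X m by (auto simp: zero_less_mult_iff linorder_neq_iff)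
  next
    case False
    have tT: "t \<le> T" proof (rule ccontr) assume "\<not> t \<le> T" thus False using i Fgt[of t] by simp qed
    from split_props(3)[OF sp[OF _ tT] NfC eps] False i show ?thesis by auto
  qed
qed



definition mons :: "nat \<Rightarrow> nat \<Rightarrow> (nat \<Rightarrow>\<^sub>0 nat) set" where
  "mons n d = {a. Poly_Mapping.keys a \<subseteq> {..<n} \<and> (\<Sum>i<n. Poly_Mapping.lookup a i) \<le> d}"

lemma mons_mono: "d \<le> d' \<Longrightarrow> mons n d \<subseteq> mons n d'"
  unfolding mons_def by auto

lemma mons_add: "a \<in> mons n d1 \<Longrightarrow> b \<in> mons n d2 \<Longrightarrow> a + b \<in> mons n (d1 + d2)"
  unfolding mons_def using keys_add[of a b] by (auto simp: lookup_add sum.distrib)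

lemma keys_mult_mons: "Poly_Mapping.keys p \<subseteq> mons n d1 \<Longrightarrow> Poly_Mapping.keys q \<subseteq> mons n d2
   \<Longrightarrow> Poly_Mapping.keys (p * q) \<subseteq> mons n (d1 + d2)"
  using keys_mult[of p q] mons_add by blast

lemma keys_pconst: "Poly_Mapping.keys (pconst c) \<subseteq> mons n 0"
  unfolding pconst_def mons_def by auto

lemma keys_pvar: "i < n \<Longrightarrow> Poly_Mapping.keys (pvar i) \<subseteq> mons n 1"
proof -
  assume i: "i < n"
  have "(\<Sum>j<n. Poly_Mapping.lookup (Poly_Mapping.single i (1::nat)) j) = (\<Sum>j<n. if j = i then 1 else 0)"
    by (rule sum.cong) (auto simp: lookup_single when_def)
  also have "\<dots> = 1" using i by simp
  finally show ?thesis unfolding pvar_def mons_def using i by auto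
qed

lemma keys_cset: "c \<in> set (Cset X Fall Cp) \<Longrightarrow>
   Poly_Mapping.keys c \<subseteq> (\<Union>h\<in>set Cp. Poly_Mapping.keys h) \<union> (\<Union>h\<in>set Fall. Poly_Mapping.keys h)"
proof -
  assume "c \<in> set (Cset X Fall Cp)"
  define W where "W = pinv (evalmat Fall X) * evalmat Cp X"
  have Wd: "dim_col W = length Cp" unfolding W_def by simp
  from \<open>c \<in> set (Cset X Fall Cp)\<close> obtain j where j: "j < length Cp" and c: "c = Cp ! j - lincombs Fall W ! j"
    unfolding Cset_def Let_def W_def by auto
  have "lincombs Fall W ! j = lincomb Fall (col W j)" unfolding lincombs_def using j Wd by simp
  hence 1: "Poly_Mapping.keys (lincombs Fall W ! j) \<subseteq> (\<Union>h\<in>set Fall. Poly_Mapping.keys h)"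
    using keys_lincomb by metis
  have 2: "Poly_Mapping.keys (Cp ! j) \<subseteq> (\<Union>h\<in>set Cp. Poly_Mapping.keys h)"
    using j by (meson UN_upper nth_mem)
  have "Poly_Mapping.keys c \<subseteq> Poly_Mapping.keys (Cp ! j) \<union> Poly_Mapping.keys (lincombs Fall W ! j)"
    unfolding c by (rule keys_diff)
  thus ?thesis using 1 2 by blast
qed

lemma run_keys:
  assumes run: "vca_run Nf n X eps F G"
  shows "\<forall>p\<in>set (F t). Poly_Mapping.keys p \<subseteq> mons n t"
proof (induction t rule: less_induct)
  case (less t)
  from run obtain m T where F0: "F 0 = [pconst m]"
    and sp: "\<And>t. 1 \<le> t \<Longrightarrow> t \<le> T \<Longrightarrow> vca_split Nf X eps
            (Cset X (concat (map F [0..<t])) (Cpre n (F 1) (F (t - 1)) t)) (F t) (G t)"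
    and Fgt: "\<And>t. t > T \<Longrightarrow> F t = []"
    unfolding vca_run_def by blast
  show ?case
  proof (cases "t = 0")
    case True thus ?thesis using F0 keys_pconst by simp
  next
    case False
    show ?thesis
    proof (cases "t \<le> T")
      case False thus ?thesis using Fgt by simp
    next
      case True
      let ?Fall = "concat (map F [0..<t])"
      let ?Cp = "Cpre n (F 1) (F (t - 1)) t"
      let ?C = "Cset X ?Fall ?Cp"
      from sp[OF _ True] \<open>t \<noteq> 0\<close> obtain V lam where
        Ft: "F t = [lincomb ?C (col V i). i \<leftarrow> [0..<length lam], sqrt (lam ! i) > eps]"
        unfolding vca_split_def by auto
      have fall: "(\<Union>h\<in>set ?Fall. Poly_Mapping.keys h) \<subseteq> mons n t"
      proof
        fix a assume "a \<in> (\<Union>h\<in>set ?Fall. Poly_Mapping.keys h)"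
        then obtain s h where s: "s < t" and h: "h \<in> set (F s)" and a: "a \<in> Poly_Mapping.keys h" by auto
        thus "a \<in> mons n t" using less.IH[OF s] mons_mono[of s t n] by auto
      qed
      have cp: "(\<Union>h\<in>set ?Cp. Poly_Mapping.keys h) \<subseteq> mons n t"
      proof (cases "t = 1")
        case True
        have "set ?Cp = pvar ` {0..<n}" using True unfolding Cpre_def by simp
        show ?thesis
        proof
          fix a assume "a \<in> (\<Union>h\<in>set ?Cp. Poly_Mapping.keys h)"
          then obtain i where i: "i < n" and a: "a \<in> Poly_Mapping.keys (pvar i)"
            using \<open>set ?Cp = pvar ` {0..<n}\<close> by auto
          show "a \<in> mons n t" using keys_pvar[OF i] a True by auto
        qed
      next
        case False
        hence t1: "1 < t" using \<open>t \<noteq> 0\<close> by simp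
        have "Poly_Mapping.keys (p * q) \<subseteq> mons n t" if "p \<in> set (F 1)" "q \<in> set (F (t - 1))" for p q
          using keys_mult_mons[of p n 1 q "t - 1"] less.IH[of 1] less.IH[of "t - 1"] that t1 by auto
        thus ?thesis unfolding Cpre_def using False by auto
      qed
      have "\<forall>c\<in>set ?C. Poly_Mapping.keys c \<subseteq> mons n t" using keys_cset fall cp by blast
      thus ?thesis unfolding Ft using keys_lincomb by fastforce
    qed
  qed
qed



lemma size_sum_mset: "finite A \<Longrightarrow> size (\<Sum>x\<in>A. f x :: 'a multiset) = (\<Sum>x\<in>A. size (f x))"
  by (induction A rule: finite_induct) auto

lemma card_mons: "finite (mons n d) \<and> card (mons n d) \<le> (n + d) choose n"
proof -
  define g where "g a = (\<Sum>i<n. replicate_mset (Poly_Mapping.lookup a i) i) + replicate_mset (d - (\<Sum>i<n. Poly_Mapping.lookup a i)) n" for a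
  have cnt: "count (g a) j = Poly_Mapping.lookup a j" if "j < n" for a j
  proof -
    have "count (g a) j = (\<Sum>i<n. count (replicate_mset (Poly_Mapping.lookup a i) i) j)"
      unfolding g_def using that by (simp add: count_sum)
    also have "\<dots> = (\<Sum>i<n. if i = j then Poly_Mapping.lookup a j else 0)"
      by (rule sum.cong) auto
    also have "\<dots> = Poly_Mapping.lookup a j" using that by simp
    finally show ?thesis .
  qed
  have inj: "inj_on g (mons n d)"
  proof (rule inj_onI)
    fix a b assume a: "a \<in> mons n d" and b: "b \<in> mons n d" and e: "g a = g b"
    show "a = b"
    proof (rule poly_mapping_eqI)
      fix j show "Poly_Mapping.lookup a j = Poly_Mapping.lookup b j"
      proof (cases "j < n")
        case True thus ?thesis using cnt[of j a] cnt[of j b] e by simp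
      next
        case False
        hence "j \<notin> Poly_Mapping.keys a" "j \<notin> Poly_Mapping.keys b" using a b unfolding mons_def by auto
        thus ?thesis by (simp add: in_keys_iff)
      qed
    qed
  qed
  have img: "g ` mons n d \<subseteq> multisets_of_size {0..n} d"
  proof
    fix M assume "M \<in> g ` mons n d"
    then obtain a where a: "a \<in> mons n d" and M: "M = g a" by auto
    have "size M = d" unfolding M g_def using a unfolding mons_def by (simp add: size_sum_mset)
    moreover have "set_mset M \<subseteq> {0..n}" unfolding M g_def by (auto simp: set_mset_sum)
    ultimately show "M \<in> multisets_of_size {0..n} d" unfolding multisets_of_size_def by simp
  qed
  have fin: "finite (multisets_of_size {0..n} d)" by auto
  have "card (multisets_of_size {0..n} d) = (n + d) choose n"
    by (simp add: card_multisets_of_size binomial_symmetric[of d "n + d"])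
  moreover have fm: "finite (mons n d)" using inj img fin by (meson finite_imageD finite_subset)
  moreover have "card (mons n d) \<le> card (multisets_of_size {0..n} d)"
    using card_inj_on_le[OF inj img fin] .
  ultimately show ?thesis by simp
qed



lemma kernel_exists:
  fixes K :: "real mat"
  assumes K: "K \<in> carrier_mat s r" and sr: "s < r"
  shows "\<exists>z. z \<in> carrier_vec r \<and> z \<noteq> 0\<^sub>v r \<and> K *\<^sub>v z = 0\<^sub>v s"
proof -
  define R where "R = gauss_jordan_single K"
  note gj = gauss_jordan_single[OF K R_def[symmetric]]
  have Rc: "R \<in> carrier_mat s r" by fact
  from gj(3) obtain f where piv: "pivot_fun R f r" unfolding row_echelon_form_def using Rc by auto
  note pp = pivot_positions[OF Rc piv]
  have "card (snd ` set (pivot_positions R)) \<le> length (pivot_positions R)"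
    by (metis card_image_le card_length finite_set le_trans)
  also have "\<dots> \<le> s" unfolding pp(4) by (rule order_trans[OF card_mono[of "{..<s}"]]) auto
  finally have "snd ` set (pivot_positions R) \<noteq> {0..<r}" using sr by auto
  note fb = find_base_vector[OF gj(3) Rc this]
  show ?thesis using fb gj(1)[of "find_base_vector R"] by auto
qed

lemma indep_count:
  fixes u :: "nat \<Rightarrow> nat \<Rightarrow> real" and c :: "nat \<Rightarrow> 'b \<Rightarrow> real" and w :: "'b \<Rightarrow> nat \<Rightarrow> real"
  assumes S: "finite S"
    and rep: "\<And>k l. k < r \<Longrightarrow> l < N \<Longrightarrow> u k l = (\<Sum>a\<in>S. c k a * w a l)"
    and orth: "\<And>k k'. k < r \<Longrightarrow> k' < r \<Longrightarrow> k \<noteq> k' \<Longrightarrow> (\<Sum>l<N. u k l * u k' l) = 0"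
    and pos: "\<And>k. k < r \<Longrightarrow> (\<Sum>l<N. u k l * u k l) > 0"
  shows "r \<le> card S"
proof (rule ccontr)
  assume "\<not> r \<le> card S"
  hence sr: "card S < r" by simp
  obtain ws where ws: "distinct ws" "set ws = S" using finite_distinct_list[OF S] by blast
  have len: "length ws = card S" using ws distinct_card by fastforce
  define K where "K = mat (card S) r (\<lambda>(j,k). c k (ws ! j))"
  have Kc: "K \<in> carrier_mat (card S) r" unfolding K_def by simp
  obtain z where z: "z \<in> carrier_vec r" "z \<noteq> 0\<^sub>v r" "K *\<^sub>v z = 0\<^sub>v (card S)"
    using kernel_exists[OF Kc sr] by blast
  have Kz: "(\<Sum>k<r. c k a * z $ k) = 0" if a: "a \<in> S" for a
  proof -
    obtain j where j: "j < length ws" and aj: "a = ws ! j" using a ws by (metis in_set_conv_nth)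
    have "(K *\<^sub>v z) $ j = 0" using z j len by simp
    moreover have "(K *\<^sub>v z) $ j = (\<Sum>k<r. c k a * z $ k)"
      using j len z(1) unfolding K_def aj by (simp add: scalar_prod_def lessThan_atLeast0)
    ultimately show ?thesis by simp
  qed
  have comb: "(\<Sum>k<r. z $ k * u k l) = 0" if l: "l < N" for l
  proof -
    have "(\<Sum>k<r. z $ k * u k l) = (\<Sum>k<r. \<Sum>a\<in>S. z $ k * (c k a * w a l))"
      by (rule sum.cong) (auto simp: rep l sum_distrib_left)
    also have "\<dots> = (\<Sum>a\<in>S. (\<Sum>k<r. c k a * z $ k) * w a l)"
      by (subst sum.swap) (auto simp: sum_distrib_right mult.assoc mult.left_commute intro!: sum.cong)
    also have "\<dots> = 0" using Kz by simp
    finally show ?thesis .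
  qed
  have zk: "z $ k' = 0" if k': "k' < r" for k'
  proof -
    have "0 = (\<Sum>l<N. (\<Sum>k<r. z $ k * u k l) * u k' l)" using comb by simp
    also have "\<dots> = (\<Sum>k<r. z $ k * (\<Sum>l<N. u k l * u k' l))"
      by (simp add: sum_distrib_right sum_distrib_left algebra_simps sum.swap[of _ "{..<N}"])
    also have "\<dots> = (\<Sum>k<r. if k = k' then z $ k' * (\<Sum>l<N. u k' l * u k' l) else 0)"
      by (rule sum.cong) (auto simp: orth k')
    also have "\<dots> = z $ k' * (\<Sum>l<N. u k' l * u k' l)" using k' by simp
    finally show ?thesis using pos[OF k'] by simp
  qed
  have "z = 0\<^sub>v r" using z(1) zk by (intro eq_vecI) auto
  thus False using z(2) by simp
qed



theorem lemma4:
  fixes n :: nat and X :: "point list" and eps :: real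
    and F G :: "nat \<Rightarrow> mpoly list" and Nf :: "mpoly list \<Rightarrow> real mat"
  assumes "distinct X"
    and "\<forall>x\<in>set X. \<forall>j\<ge>n. x j = 0"
    and "eps \<ge> 0"
    and "Nf = Nc \<or> Nf = Ng n X"
    and "vca_run Nf n X eps F G"
  shows "\<forall>\<tau>::nat. card (\<Union>t\<le>\<tau>. set (F t)) = (\<Sum>t\<le>\<tau>. card (set (F t)))
              \<and> (\<Sum>t\<le>\<tau>. card (set (F t))) \<le> (n + \<tau>) choose n"
proof
  fix \<tau> :: nat
  note run = assms(5) and eps = assms(3)
  have NfC: "\<And>H. Nf H \<in> carrier_mat (length H) (length H)" using assms(4) by (auto simp: Nc_def Ng_def)
  from run obtain m T where F0: "F 0 = [pconst m]"
    and sp: "\<And>t. 1 \<le> t \<Longrightarrow> t \<le> T \<Longrightarrow> vca_split Nf X eps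
            (Cset X (concat (map F [0..<t])) (Cpre n (F 1) (F (t - 1)) t)) (F t) (G t)"
    and Fgt: "\<And>t. t > T \<Longrightarrow> F t = []"
    unfolding vca_run_def by blast
  have binpos: "1 \<le> (n + \<tau>) choose n" by (simp add: Suc_leI)
  show "card (\<Union>t\<le>\<tau>. set (F t)) = (\<Sum>t\<le>\<tau>. card (set (F t)))
              \<and> (\<Sum>t\<le>\<tau>. card (set (F t))) \<le> (n + \<tau>) choose n"
  proof (cases "X = []")
    case True
    have Fe: "F t = []" if t: "t \<ge> 1" for t
    proof (rule ccontr)
      assume ne: "F t \<noteq> []"
      have tT: "t \<le> T" proof (rule ccontr) assume "\<not> t \<le> T" thus False using ne Fgt[of t] by simp qed
      from split_props(3)[OF sp[OF t tT] NfC eps] ne have "dotp X (F t ! 0) (F t ! 0) > 0" by auto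
      thus False using True by (simp add: dotp_def)
    qed
    have sF: "set (F t) = (if t = 0 then {pconst m} else {})" for t
      using Fe[of t] F0 by auto
    have "(\<Union>t\<le>\<tau>. set (F t)) = {pconst m}" unfolding sF by auto
    moreover have "(\<Sum>t\<le>\<tau>. card (set (F t))) = 1"
      unfolding sF by (simp add: if_distrib sum.delta cong: if_cong)
    ultimately show ?thesis using binpos by simp
  next
    case False
    define I where "I = Sigma {..\<tau>} (\<lambda>t. {..<length (F t)})"
    define P where "P = (\<lambda>(t,i). F t ! i)"
    have finI: "finite I" unfolding I_def by auto
    have ne0: "P (t,i) \<noteq> P (s,j)" if "(t,i) \<noteq> (s,j)" "i < length (F t)" "j < length (F s)" for t i s j
    proof
      assume e: "P (t,i) = P (s,j)"
      have "dotp X (F t ! i) (F s ! j) = 0" using run_orth[OF run eps NfC that(2,3,1)] .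
      moreover have "dotp X (F t ! i) (F t ! i) > 0" using run_pos[OF run eps NfC False that(2)] .
      ultimately show False using e unfolding P_def by simp
    qed
    have inj: "inj_on P I"
      by (rule inj_onI) (use ne0 in \<open>auto simp: I_def\<close>)
    have dist: "distinct (F t)" for t
      unfolding distinct_conv_nth using ne0[of t _ t] unfolding P_def by auto
    have U: "(\<Union>t\<le>\<tau>. set (F t)) = P ` I"
      unfolding I_def P_def by (auto simp: in_set_conv_nth image_iff; blast)
    have cI: "card I = (\<Sum>t\<le>\<tau>. length (F t))" unfolding I_def by (simp add: card_SigmaI)
    have sumeq: "(\<Sum>t\<le>\<tau>. card (set (F t))) = card I"
      unfolding cI using dist by (simp add: distinct_card)
    have c1: "card (\<Union>t\<le>\<tau>. set (F t)) = (\<Sum>t\<le>\<tau>. card (set (F t)))"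
      unfolding U sumeq using card_image[OF inj] .
    obtain js where js: "distinct js" "set js = I" using finite_distinct_list[OF finI] by blast
    have lis: "length js = card I" using js distinct_card by fastforce
    define e where "e k = js ! k" for k
    have eI: "e k \<in> I" if "k < card I" for k using js lis that unfolding e_def by (metis nth_mem)
    have "card I \<le> card (mons n \<tau>)"
    proof (rule indep_count[where u = "\<lambda>k l. peval (P (e k)) (X ! l)" and c = "\<lambda>k a. Poly_Mapping.lookup (P (e k)) a"
          and w = "\<lambda>a l. monoev a (X ! l)" and N = "length X"])
      show "finite (mons n \<tau>)" using card_mons by blast
    next
      fix k l assume k: "k < card I" and l: "l < length X"
      obtain t i where ti: "e k = (t,i)" "t \<le> \<tau>" "i < length (F t)" using eI[OF k] unfolding I_def by auto
      have "F t ! i \<in> set (F t)" using ti(3) by simp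
      hence "Poly_Mapping.keys (F t ! i) \<subseteq> mons n t" using run_keys[OF run, of t] by blast
      hence "Poly_Mapping.keys (P (e k)) \<subseteq> mons n \<tau>"
        using ti mons_mono[of t \<tau> n] unfolding P_def by auto
      thus "peval (P (e k)) (X ! l) = (\<Sum>a\<in>mons n \<tau>. Poly_Mapping.lookup (P (e k)) a * monoev a (X ! l))"
        using card_mons by (intro peval_superset) auto
    next
      fix k k' assume k: "k < card I" and k': "k' < card I" and kk: "k \<noteq> k'"
      obtain t i where ti: "e k = (t,i)" "i < length (F t)" using eI[OF k] unfolding I_def by auto
      obtain s j where sj: "e k' = (s,j)" "j < length (F s)" using eI[OF k'] unfolding I_def by auto
      have "e k \<noteq> e k'" using kk k k' js lis unfolding e_def by (simp add: nth_eq_iff_index_eq)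
      hence "(t,i) \<noteq> (s,j)" using ti sj by simp
      from run_orth[OF run eps NfC ti(2) sj(2) this]
      show "(\<Sum>l<length X. peval (P (e k)) (X ! l) * peval (P (e k')) (X ! l)) = 0"
        unfolding dotp_def P_def ti sj by simp
    next
      fix k assume k: "k < card I"
      obtain t i where ti: "e k = (t,i)" "i < length (F t)" using eI[OF k] unfolding I_def by auto
      from run_pos[OF run eps NfC False ti(2)]
      show "(\<Sum>l<length X. peval (P (e k)) (X ! l) * peval (P (e k)) (X ! l)) > 0"
        unfolding dotp_def P_def ti by simp
    qed
    also have "\<dots> \<le> (n + \<tau>) choose n" using card_mons by blast
    finally show ?thesis using c1 sumeq by simp
  qed
qed

end
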